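(* Let $a,b,h\in\mathbb{R}$ with $h>0$ and $\frac{b-a}{h}\in\mathbb{N}\setminus\{1\}$. Suppose $w:[a,b]_h\to\mathbb{R}$ satisfies $$-D_h^+D_h^-w(x)\le\lambda_{0,h}w(x)\ \ (x\in(a,b)_h),\qquad w(a)\le0,\ w(b)\le0,$$ for some $\lambda_{0,h}<\lambda_{1,h}:=\frac{4}{h^2}\sin^2\big(\frac{\pi h}{2(b-a)}\big)$. Then $w(x)\le0$ for all $x\in[a,b]_h$.
   Context: $[a,b]_h=[a,b]\cap(a+h\mathbb{Z})$ and $(a,b)_h=(a,b)\cap(a+h\mathbb{Z})$ (the grid points). $D_h^+w(x)=\frac{w(x+h)-w(x)}{h}$, $D_h^-w(x)=\frac{w(x)-w(x-h)}{h}$, so $D_h^+D_h^-w(x)=\frac{w(x+h)-2w(x)+w(x-h)}{h^2}$. *)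

theory Defs
  imports Complex_Main
begin

definition grid_closed :: "real \<Rightarrow> real \<Rightarrow> real \<Rightarrow> real set" where
  "grid_closed a b h = {x. a \<le> x \<and> x \<le> b \<and> (\<exists>k::int. x = a + of_int k * h)}"

definition grid_open :: "real \<Rightarrow> real \<Rightarrow> real \<Rightarrow> real set" where
  "grid_open a b h = {x. a < x \<and> x < b \<and> (\<exists>k::int. x = a + of_int k * h)}"

definition Dplus :: "real \<Rightarrow> (real \<Rightarrow> real) \<Rightarrow> real \<Rightarrow> real" where
  "Dplus h w x = (w (x + h) - w x) / h"

definition Dminus :: "real \<Rightarrow> (real \<Rightarrow> real) \<Rightarrow> real \<Rightarrow> real" where
  "Dminus h w x = (w x - w (x - h)) / h"

end

theory Submission
  imports Defs
begin

theorem mainTheorem10: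
  fixes a b h lam0 :: real and w :: "real \<Rightarrow> real" and N :: nat
  assumes "h > 0"
    and "(b - a) / h = real N" and "N \<noteq> 1"
    and "\<forall>x\<in>grid_open a b h. - Dplus h (Dminus h w) x \<le> lam0 * w x"
    and "w a \<le> 0" and "w b \<le> 0"
    and "lam0 < 4 / h^2 * (sin (pi * h / (2 * (b - a))))^2"
  shows "\<forall>x\<in>grid_closed a b h. w x \<le> 0"
proof
  fix x assume xg: "x \<in> grid_closed a b h"
  have hp: "h > 0" using assms(1) .
  have bN: "b = a + real N * h" using assms(2) hp by (simp add: field_simps)
  obtain k :: int where xk: "x = a + of_int k * h" and ax: "a \<le> x" and xb: "x \<le> b"
    using xg unfolding grid_closed_def by auto
  have k0: "0 \<le> k" using ax xk hp by (simp add: zero_le_mult_iff)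
  have kN: "of_int k \<le> real N" using xb xk bN hp by simp
  define n where "n = nat k"
  have xn: "x = a + real n * h" using xk k0 n_def by simp
  have nN: "n \<le> N" using kN k0 n_def by linarith
  define u where "u = (\<lambda>m::nat. w (a + real m * h))"
  show "w x \<le> 0"
  proof (rule ccontr)
    assume neg: "\<not> w x \<le> 0"
    hence upos: "u n > 0" using xn u_def by simp
    have N0: "N \<noteq> 0"
    proof
      assume "N = 0" hence "n = 0" using nN by simp
      thus False using upos u_def assms(5) by simp
    qed
    have Npos: "real N > 0" using N0 by simp
    have arg: "pi * h / (2 * (b - a)) = pi / (2 * real N)" using bN hp by simp
    define c where "c = pi / (2 * real N)"
    have cpos: "c > 0" using Npos c_def by simp
    have lamc: "lam0 * h^2 / 4 < (sin c)^2"
      using assms(7) arg c_def hp by (simp add: field_simps)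
    have "((\<lambda>t. (sin t)^2) \<longlongrightarrow> (sin c)^2) (at_left c)"
      by (intro tendsto_intros)
    hence "eventually (\<lambda>t. (sin t)^2 > lam0 * h^2 / 4) (at_left c)"
      using lamc by (rule order_tendstoD)
    hence "\<exists>b0<c. \<forall>y>b0. y < c \<longrightarrow> (sin y)^2 > lam0 * h^2 / 4"
      by (simp only: eventually_at_left_field)
    then obtain b0 where b0: "b0 < c" and b0P: "\<And>y. b0 < y \<Longrightarrow> y < c \<Longrightarrow> (sin y)^2 > lam0 * h^2 / 4"
      by blast
    define t where "t = (max b0 0 + c) / 2"
    have t1: "0 < t" "t < c" "b0 < t" using b0 cpos t_def by auto
    have st: "(sin t)^2 > lam0 * h^2 / 4" using b0P t1 by auto
    define psi where "psi = (\<lambda>m::nat. cos (2 * t * (real m - real N / 2)))"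
    have psipos: "psi m > 0" if "m \<le> N" for m
    proof -
      have "\<bar>real m - real N / 2\<bar> \<le> real N / 2"
        using that by (cases "real m \<ge> real N / 2") (simp_all add: abs_if)
      hence "\<bar>2 * t * (real m - real N / 2)\<bar> \<le> t * real N"
        using t1 by (simp add: abs_mult mult_left_mono)
      also have "\<dots> < c * real N" using t1 Npos by simp
      also have "\<dots> = pi / 2" using c_def Npos by simp
      finally show ?thesis unfolding psi_def by (intro cos_gt_zero_pi) auto
    qed
    have psirec: "psi (m+1) + psi (m - 1) = (2 - 4 * (sin t)^2) * psi m" if "m \<ge> 1" for m
    proof -
      define A where "A = 2 * t * (real m - real N / 2)"
      have e1: "psi (m+1) = cos (A + 2*t)" unfolding psi_def A_def by (simp add: algebra_simps)
      have e2: "psi (m-1) = cos (A - 2*t)" unfolding psi_def A_def using that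
        by (simp add: of_nat_diff algebra_simps)
      have "cos (A + 2*t) + cos (A - 2*t) = 2 * cos (2*t) * cos A"
        by (simp add: cos_add cos_diff)
      also have "cos (2*t) = 1 - 2 * (sin t)^2" by (rule cos_double_sin)
      finally show ?thesis using e1 e2 unfolding psi_def A_def by (simp add: algebra_simps)
    qed
    define r where "r = (\<lambda>m. u m / psi m)"
    define M where "M = Max (r ` {0..N})"
    have fin: "finite (r ` {0..N})" by simp
    have Mge: "r m \<le> M" if "m \<le> N" for m
      unfolding M_def using fin that by (intro Max_ge) auto
    obtain k0 where k0N: "k0 \<le> N" and rk0: "r k0 = M"
    proof -
      have "M \<in> r ` {0..N}" unfolding M_def by (rule Max_in[OF fin]) auto
      thus ?thesis using that by auto
    qed
    have Mpos: "M > 0"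
    proof -
      have "r n > 0" unfolding r_def using upos psipos[OF nN] by simp
      thus ?thesis using Mge[OF nN] by simp
    qed
    have ule: "u m \<le> M * psi m" if "m \<le> N" for m
      using Mge[OF that] psipos[OF that] unfolding r_def by (simp add: divide_le_eq)
    have ueq: "u k0 = M * psi k0" using rk0 psipos[OF k0N] unfolding r_def by (auto simp: field_simps)
    have uk0: "u k0 > 0" using ueq Mpos psipos[OF k0N] by simp
    have k0ne: "k0 \<noteq> 0" proof assume "k0 = 0" thus False using uk0 assms(5) u_def by simp qed
    have k0neN: "k0 \<noteq> N" proof assume "k0 = N" thus False using uk0 assms(6) u_def bN by simp qed
    define x0 where "x0 = a + real k0 * h"
    have x0o: "x0 \<in> grid_open a b h"
    proof -
      have "a < x0" using k0ne hp x0_def by simp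
      moreover have "x0 < b" using k0N k0neN hp x0_def bN by simp
      moreover have "x0 = a + of_int (int k0) * h" using x0_def by simp
      ultimately show ?thesis unfolding grid_open_def by blast
    qed
    have H: "- Dplus h (Dminus h w) x0 \<le> lam0 * w x0" using assms(4) x0o by blast
    have ep: "x0 + h = a + real (k0+1) * h" using x0_def by (simp add: algebra_simps)
    have em: "x0 - h = a + real (k0-1) * h" using x0_def k0ne by (simp add: of_nat_diff algebra_simps)
    have "- Dplus h (Dminus h w) x0 = (2 * w x0 - w (x0+h) - w (x0-h)) / h^2"
      unfolding Dplus_def Dminus_def using hp
      by (simp add: field_simps power2_eq_square)
    also have "\<dots> = (2 * u k0 - u (k0+1) - u (k0-1)) / h^2"
      by (simp only: u_def ep[symmetric] em[symmetric] x0_def[symmetric])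
    finally have "- Dplus h (Dminus h w) x0 = (2 * u k0 - u (k0+1) - u (k0-1)) / h^2" .
    with H have "(2 * u k0 - u (k0+1) - u (k0-1)) / h^2 \<le> lam0 * u k0"
      using u_def x0_def by simp
    hence H2: "2 * u k0 - u (k0+1) - u (k0-1) \<le> lam0 * h^2 * u k0"
      using hp by (simp add: divide_le_eq algebra_simps)
    have "u (k0+1) + u (k0-1) \<le> M * (psi (k0+1) + psi (k0-1))"
      using ule[of "k0+1"] ule[of "k0-1"] k0N k0neN by (simp add: distrib_left add_mono)
    also have "\<dots> = (2 - 4 * (sin t)^2) * u k0"
      using psirec[of k0] k0ne ueq by simp
    finally have "4 * (sin t)^2 * u k0 \<le> lam0 * h^2 * u k0" using H2 by (simp add: algebra_simps)
    hence "4 * (sin t)^2 \<le> lam0 * h^2" using uk0 by simp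
    thus False using st by simp
  qed
qed

end
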